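(* Let $S$ be a semidomain. If $S[x]$ is a length-factorial semidomain, then $S$ is an integral domain.
   Context: A semidomain is a subset $S$ of an integral domain $R$ containing $0$ and $1$ and closed under addition and multiplication; $S[x]$ is the semidomain of polynomials in $R[x]$ with coefficients in $S$. For a semidomain $T$, $T^*=T\setminus\{0\}$ is a multiplicative monoid; an atom is a nonunit $a\in T^*$ such that $a=bc$ with $b,c\in T^*$ forces $b$ or $c$ to be a unit; $T$ is atomic if every nonunit of $T^*$ is a finite product of atoms. A factorization of $b$ is a formal product of atoms (considered up to order and up to replacing atoms by associates) equal to $b$ up to a unit; its length is the number of atoms counted with multiplicity. $T$ is a length-factorial semidomain (LFS) if $T$ is atomic and any two distinct factorizations of the same element have distinct lengths. *)

theory Defs
  imports "HOL-Computational_Algebra.Polynomial" "HOL-Library.Multiset"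
begin

definition semidomain :: "'a::idom set \<Rightarrow> bool" where
  "semidomain T \<longleftrightarrow> 0 \<in> T \<and> 1 \<in> T \<and>
     (\<forall>a\<in>T. \<forall>b\<in>T. a + b \<in> T) \<and> (\<forall>a\<in>T. \<forall>b\<in>T. a * b \<in> T)"

definition polys :: "'a::idom set \<Rightarrow> 'a poly set" where
  "polys S = {p. \<forall>i. coeff p i \<in> S}"

definition sd_unit :: "'a::idom set \<Rightarrow> 'a \<Rightarrow> bool" where
  "sd_unit T u \<longleftrightarrow> u \<in> T - {0} \<and> (\<exists>v\<in>T - {0}. u * v = 1)"

definition sd_assoc :: "'a::idom set \<Rightarrow> 'a \<Rightarrow> 'a \<Rightarrow> bool" where
  "sd_assoc T a b \<longleftrightarrow> (\<exists>u. sd_unit T u \<and> a = u * b)"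

definition sd_atom :: "'a::idom set \<Rightarrow> 'a \<Rightarrow> bool" where
  "sd_atom T a \<longleftrightarrow> a \<in> T - {0} \<and> \<not> sd_unit T a \<and>
     (\<forall>b\<in>T - {0}. \<forall>c\<in>T - {0}. a = b * c \<longrightarrow> sd_unit T b \<or> sd_unit T c)"

definition sd_factorization :: "'a::idom set \<Rightarrow> 'a \<Rightarrow> 'a list \<Rightarrow> bool" where
  "sd_factorization T b xs \<longleftrightarrow> (\<forall>x\<in>set xs. sd_atom T x) \<and> sd_assoc T b (prod_list xs)"

definition sd_fact_equiv :: "'a::idom set \<Rightarrow> 'a list \<Rightarrow> 'a list \<Rightarrow> bool" where
  "sd_fact_equiv T xs ys \<longleftrightarrow> (\<exists>zs. mset zs = mset ys \<and> list_all2 (sd_assoc T) xs zs)"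

definition sd_atomic :: "'a::idom set \<Rightarrow> bool" where
  "sd_atomic T \<longleftrightarrow> (\<forall>b\<in>T - {0}. \<not> sd_unit T b \<longrightarrow>
     (\<exists>xs. xs \<noteq> [] \<and> (\<forall>x\<in>set xs. sd_atom T x) \<and> b = prod_list xs))"

definition length_factorial :: "'a::idom set \<Rightarrow> bool" where
  "length_factorial T \<longleftrightarrow> sd_atomic T \<and>
     (\<forall>b\<in>T - {0}. \<forall>xs ys. sd_factorization T b xs \<and> sd_factorization T b ys \<and>
        \<not> sd_fact_equiv T xs ys \<longrightarrow> length xs \<noteq> length ys)"

end

theory Submission
  imports Defs
begin

lemma poly_deg1: "degree (b::'a::idom poly) \<le> 1 \<Longrightarrow> b = [:coeff b 0, coeff b 1:]"
  by (rule poly_eqI) (auto simp: coeff_pCons coeff_eq_0 numeral_2_eq_2 numeral_3_eq_3 split: nat.split)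
lemma poly_deg2: "degree (b::'a::idom poly) \<le> 2 \<Longrightarrow> b = [:coeff b 0, coeff b 1, coeff b 2:]"
  by (rule poly_eqI) (auto simp: coeff_pCons coeff_eq_0 numeral_2_eq_2 numeral_3_eq_3 split: nat.split)
lemma poly_deg3: "degree (b::'a::idom poly) \<le> 3 \<Longrightarrow> b = [:coeff b 0, coeff b 1, coeff b 2, coeff b 3:]"
  by (rule poly_eqI) (auto simp: coeff_pCons coeff_eq_0 numeral_2_eq_2 numeral_3_eq_3 split: nat.split)

lemma ex1: "[:a,b:] * [:c,d,e,f:] = ([:1,0,1,0,1:] :: 'a::idom poly) \<Longrightarrow> a*c = 1 \<and> b*f = 1 \<and> a*d+b*c = 0"
  by (simp add: algebra_simps)
lemma ex2: "[:a,b,c:] * [:d,e,f:] = ([:1,0,1,0,1:] :: 'a::idom poly) \<Longrightarrow> a*d = 1 \<and> a*e+b*d = 0 \<and> a*f+b*e+c*d = 1 \<and> b*f+c*e=0 \<and> c*f = 1"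
  by (simp add: algebra_simps)
lemma ex3: "([:1,1:] :: 'a::idom poly) * [:1,0,1,0,1:] = [:1,0,0,1:] * [:1,1,1:]"
  by (simp add: algebra_simps)

lemma cube: "(t::'a::idom) + s = 1 \<Longrightarrow> t*s = 1 \<Longrightarrow> t^3 = -1"
proof -
  assume a: "t + s = 1" "t*s = 1"
  have "t^3 + 1 = (t+1)*(t*t - t*(t+s) + t*s)" using a by (simp add: algebra_simps power3_eq_cube)
  also have "\<dots> = 0" by (simp add: algebra_simps)
  finally show ?thesis by (simp add: add_eq_0_iff2)
qed

lemma sdm: "semidomain S \<Longrightarrow> a \<in> S \<Longrightarrow> b \<in> S \<Longrightarrow> a*b \<in> S"
  by (simp add: semidomain_def)
lemma sdc: "b \<in> polys S \<Longrightarrow> coeff b i \<in> S"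
  by (simp add: polys_def)

lemma unit_deg: "sd_unit (polys S) u \<Longrightarrow> degree u = 0"
proof -
  assume "sd_unit (polys S) u"
  then obtain v where "u \<noteq> 0" "v \<noteq> 0" "u * v = 1" by (auto simp: sd_unit_def)
  then show ?thesis using degree_mult_eq[of u v] by (metis degree_1 add_is_0)
qed

lemma polys_pCons: "a \<in> S \<Longrightarrow> q \<in> polys S \<Longrightarrow> pCons a q \<in> polys S"
  by (auto simp: polys_def coeff_pCons split: nat.split)
lemma polys_0: "semidomain S \<Longrightarrow> 0 \<in> polys S"
  by (simp add: polys_def semidomain_def)

lemma const_unit:
  assumes sd: "semidomain S" and b: "b \<in> polys S" and c: "c \<in> polys S" and bc: "b*c = p"
    and p0: "coeff p 0 = 1" and db: "degree b = 0"
  shows "sd_unit (polys S) b"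
proof -
  have bb: "b = [:coeff b 0:]" using db by (metis degree_0_id)
  have e: "coeff b 0 * coeff c 0 = 1" using p0[folded bc] by (simp add: coeff_mult_0)
  have v: "[:coeff c 0:] \<in> polys S" using sd c by (intro polys_pCons polys_0) (auto simp: sdc)
  have "b * [:coeff c 0:] = 1" using e by (subst bb) (simp add: one_pCons mult.commute)
  moreover have "b \<in> polys S - {0}" using b e by auto
  moreover have "[:coeff c 0:] \<noteq> 0" using e by auto
  ultimately show ?thesis using v unfolding sd_unit_def by blast
qed

lemma atom_crit:
  assumes sd: "semidomain S" and p: "p \<in> polys S" "p \<noteq> 0" "degree p > 0" "coeff p 0 = 1"
    and H: "\<And>b c. b \<in> polys S \<Longrightarrow> c \<in> polys S \<Longrightarrow> b*c = p \<Longrightarrow> 0 < degree b \<Longrightarrow> 0 < degree c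
       \<Longrightarrow> degree b \<le> degree c \<Longrightarrow> False"
  shows "sd_atom (polys S) p"
  unfolding sd_atom_def
proof (intro conjI ballI impI)
  show "p \<in> polys S - {0}" using p by auto
  show "\<not> sd_unit (polys S) p" using p unit_deg by fastforce
next
  fix b c assume b: "b \<in> polys S - {0}" and c: "c \<in> polys S - {0}" and e: "p = b * c"
  have dp: "degree p = degree b + degree c" using b c e by (simp add: degree_mult_eq)
  show "sd_unit (polys S) b \<or> sd_unit (polys S) c"
  proof (cases "degree b = 0")
    case True thus ?thesis using const_unit[OF sd _ _ e[symmetric]] b c p by auto
  next
    case nb: False
    show ?thesis
    proof (cases "degree c = 0")
      case True thus ?thesis using const_unit[OF sd _ _ _ _ True, of b p] b c p e
        by (auto simp: mult.commute)
    next
      case False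
      show ?thesis
      proof (cases "degree b \<le> degree c")
        case True thus ?thesis using H[of b c] b c e nb False by auto
      next
        case f2: False thus ?thesis using H[of c b] b c e nb False by (auto simp: mult.commute)
      qed
    qed
  qed
qed

lemma sdm3: "semidomain S \<Longrightarrow> a \<in> S \<Longrightarrow> b \<in> S \<Longrightarrow> c \<in> S \<Longrightarrow> d \<in> S \<Longrightarrow> a*b*c*d \<in> S"
  by (simp add: sdm)

lemma degs:
  assumes "b * c = (p::'a::idom poly)" "0 < degree b" "0 < degree c"
  shows "degree b + degree c = degree p"
proof -
  have "b \<noteq> 0" "c \<noteq> 0" using assms by auto
  thus ?thesis using assms(1) degree_mult_eq[of b c] by simp
qed

lemma atom_q2:
  assumes sd: "semidomain S" and nm: "-1 \<notin> S"
  shows "sd_atom (polys S) ([:1,1,1:] :: 'a::idom poly)"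
proof (rule atom_crit[OF sd])
  show "[:1,1,1:] \<in> polys S" using sd by (intro polys_pCons polys_0) (auto simp: semidomain_def)
next
  fix b c :: "'a poly" assume b: "b \<in> polys S" and c: "c \<in> polys S" and e: "b * c = [:1,1,1:]"
    and d: "0 < degree b" "0 < degree c" "degree b \<le> degree c"
  have "degree b + degree c = 2" using degs[OF e d(1,2)] by simp
  hence "degree b = 1" "degree c = 1" using d by auto
  hence "[:coeff b 0, coeff b 1:] * [:coeff c 0, coeff c 1:] = [:1,1,1:]"
    using e poly_deg1[of b] poly_deg1[of c] by simp
  hence eq: "coeff b 0 * coeff c 0 = 1 \<and> coeff b 0 * coeff c 1 + coeff b 1 * coeff c 0 = 1 \<and> coeff b 1 * coeff c 1 = 1"
    by (simp add: algebra_simps)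
  define t where "t = coeff b 0 * coeff c 1"
  have h1: "t + coeff b 1 * coeff c 0 = 1" using eq by (simp add: t_def)
  have "t * (coeff b 1 * coeff c 0) = (coeff b 0 * coeff c 0) * (coeff b 1 * coeff c 1)"
    by (simp add: t_def algebra_simps)
  hence h2: "t * (coeff b 1 * coeff c 0) = 1" using eq by (simp only: mult_1)
  have "t^3 = -1" using cube[OF h1 h2] .
  moreover have "t^3 \<in> S" unfolding t_def power3_eq_cube using sd b c by (auto intro!: sdm sdc)
  ultimately show False using nm by simp
qed (auto)

lemma negl: "(a::'a::idom)*c = 1 \<Longrightarrow> b*e = 1 \<Longrightarrow> a*d+b*c = 0 \<Longrightarrow> a*d*e*a = -1"
proof -
  assume h: "a*c = 1" "b*e = 1" "a*d+b*c = 0"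
  have "a*d = -(b*c)" using h(3) by (simp add: eq_neg_iff_add_eq_0)
  hence "a*d*e*a = -((b*e)*(a*c))" by (simp add: algebra_simps)
  thus ?thesis using h by simp
qed

lemma case22:
  assumes sd: "semidomain S" and nm: "-1 \<notin> S"
    and S: "a \<in> S" "b \<in> S" "c \<in> S" "d \<in> S" "e \<in> S" "f \<in> S"
    and h: "(a::'a::idom)*d = 1" "a*e+b*d = 0" "a*f+b*e+c*d = 1" "b*f+c*e=0" "c*f = 1"
  shows False
proof (cases "e = 0")
  case True
  have "d \<noteq> 0" using h(1) by auto
  hence b0: "b = 0" using h(2) True by simp
  have h1: "a*f + c*d = 1" using h(3) b0 by simp
  have "(a*f)*(c*d) = (a*d)*(c*f)" by (simp add: algebra_simps)
  hence h2: "(a*f)*(c*d) = 1" using h by simp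
  have "(a*f)^3 = -1" using cube[OF h1 h2] .
  moreover have "(a*f)^3 \<in> S" unfolding power3_eq_cube using sd S by (auto intro!: sdm)
  ultimately show False using nm by simp
next
  case False
  have "a*(a*e+b*d) = a*a*e + b*(a*d)" by (simp add: algebra_simps)
  hence hb: "b = -(a*a*e)" using h by (simp add: eq_neg_iff_add_eq_0 add.commute)
  have "e*(c - a*a*f) = b*f + c*e" using hb by (simp add: algebra_simps)
  hence "c = a*a*f" using h(4) False by simp
  hence "(a*f)*(a*f) = 1" using h(5) by (simp add: algebra_simps)
  hence "(a*f - 1)*(a*f+1) = 0" by (simp add: algebra_simps)
  hence "a*f = 1 \<or> a*f = -1" by (simp add: eq_neg_iff_add_eq_0)
  moreover have "a*f \<in> S" "b*e \<in> S" using sd S by (auto intro!: sdm)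
  moreover {
    assume af: "a*f = 1"
    have "c = a" using \<open>c = a*a*f\<close> af by (simp add: algebra_simps)
    hence "b*e = -1" using h af by (simp add: eq_neg_iff_add_eq_0 add.commute)
  }
  ultimately show False using nm by auto
qed

lemma atom_p1:
  assumes sd: "semidomain S"
  shows "sd_atom (polys S) ([:1,1:] :: 'a::idom poly)"
proof (rule atom_crit[OF sd])
  show "[:1,1:] \<in> polys S" using sd by (intro polys_pCons polys_0) (auto simp: semidomain_def)
next
  fix b c :: "'a poly" assume e: "b * c = [:1,1:]"
    and d: "0 < degree b" "0 < degree c" "degree b \<le> degree c"
  have "degree b + degree c = 1" using degs[OF e d(1,2)] by simp
  thus False using d by auto
qed (auto)

lemma atom_q1:
  assumes sd: "semidomain S" and nm: "-1 \<notin> S"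
  shows "sd_atom (polys S) ([:1,0,0,1:] :: 'a::idom poly)"
proof (rule atom_crit[OF sd])
  show "[:1,0,0,1:] \<in> polys S" using sd by (intro polys_pCons polys_0) (auto simp: semidomain_def)
next
  fix b c :: "'a poly" assume b: "b \<in> polys S" and c: "c \<in> polys S" and e: "b * c = [:1,0,0,1:]"
    and d: "0 < degree b" "0 < degree c" "degree b \<le> degree c"
  have "degree b + degree c = 3" using degs[OF e d(1,2)] by simp
  hence "degree b = 1" "degree c = 2" using d by auto
  hence "[:coeff b 0, coeff b 1:] * [:coeff c 0, coeff c 1, coeff c 2:] = [:1,0,0,1:]"
    using e poly_deg1[of b] poly_deg2[of c] by simp
  hence eq: "coeff b 0 * coeff c 0 = 1 \<and> coeff b 1 * coeff c 2 = 1 \<and> coeff b 0 * coeff c 1 + coeff b 1 * coeff c 0 = 0"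
    by (simp add: algebra_simps)
  have "coeff b 0 * coeff c 1 * coeff c 2 * coeff b 0 = -1" using negl eq by blast
  moreover have "coeff b 0 * coeff c 1 * coeff c 2 * coeff b 0 \<in> S" using sd b c by (auto intro!: sdm3 sdc)
  ultimately show False using nm by simp
qed (auto)

lemma atom_p2:
  assumes sd: "semidomain S" and nm: "-1 \<notin> S"
  shows "sd_atom (polys S) ([:1,0,1,0,1:] :: 'a::idom poly)"
proof (rule atom_crit[OF sd])
  show "[:1,0,1,0,1:] \<in> polys S" using sd by (intro polys_pCons polys_0) (auto simp: semidomain_def)
next
  fix b c :: "'a poly" assume b: "b \<in> polys S" and c: "c \<in> polys S" and e: "b * c = [:1,0,1,0,1:]"
    and d: "0 < degree b" "0 < degree c" "degree b \<le> degree c"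
  have "degree b + degree c = 4" using degs[OF e d(1,2)] by simp
  hence "(degree b = 1 \<and> degree c = 3) \<or> (degree b = 2 \<and> degree c = 2)" using d by auto
  thus False
  proof
    assume "degree b = 1 \<and> degree c = 3"
    hence "[:coeff b 0, coeff b 1:] * [:coeff c 0, coeff c 1, coeff c 2, coeff c 3:] = [:1,0,1,0,1:]"
      using e poly_deg1[of b] poly_deg3[of c] by simp
    hence eq: "coeff b 0 * coeff c 0 = 1 \<and> coeff b 1 * coeff c 3 = 1 \<and> coeff b 0 * coeff c 1 + coeff b 1 * coeff c 0 = 0"
      using ex1 by blast
    have "coeff b 0 * coeff c 1 * coeff c 3 * coeff b 0 = -1" using negl eq by blast
    moreover have "coeff b 0 * coeff c 1 * coeff c 3 * coeff b 0 \<in> S" using sd b c by (auto intro!: sdm3 sdc)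
    ultimately show False using nm by simp
  next
    assume "degree b = 2 \<and> degree c = 2"
    hence "[:coeff b 0, coeff b 1, coeff b 2:] * [:coeff c 0, coeff c 1, coeff c 2:] = [:1,0,1,0,1:]"
      using e poly_deg2[of b] poly_deg2[of c] by simp
    from ex2[OF this] show False
      using case22[OF sd nm, of "coeff b 0" "coeff b 1" "coeff b 2" "coeff c 0" "coeff c 1" "coeff c 2"]
        b c by (auto simp: sdc)
  qed
qed (auto)

lemma assoc_deg: "sd_assoc (polys S) a b \<Longrightarrow> degree a = degree b"
proof -
  assume "sd_assoc (polys S) a b"
  then obtain u where u: "sd_unit (polys S) u" "a = u*b" by (auto simp: sd_assoc_def)
  have "u \<noteq> 0" using u by (auto simp: sd_unit_def)
  thus ?thesis using u unit_deg[OF u(1)] degree_mult_eq[of u b] by (cases "b = 0") auto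
qed

theorem corollary5p3:
  fixes S :: "'a::idom set"
  assumes "semidomain S"
    and "length_factorial (polys S)"
  shows "\<forall>s\<in>S. - s \<in> S"
proof (cases "-1 \<in> S")
  case True thus ?thesis using assms(1) sdm[of S "-1"] by fastforce
next
  case nm: False
  let ?T = "polys S"
  define p1 :: "'a poly" where "p1 = [:1,1:]"
  define p2 :: "'a poly" where "p2 = [:1,0,1,0,1:]"
  define q1 :: "'a poly" where "q1 = [:1,0,0,1:]"
  define q2 :: "'a poly" where "q2 = [:1,1,1:]"
  have eqp: "p1 * p2 = q1 * q2" unfolding p1_def p2_def q1_def q2_def by (rule ex3)
  have u1: "sd_unit ?T 1" using assms(1) unfolding sd_unit_def
    by (auto intro!: polys_pCons polys_0 simp: one_pCons semidomain_def)
  have bT: "p1 * p2 \<in> ?T - {0}" unfolding p1_def p2_def using assms(1)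
    by (simp add: algebra_simps) (intro polys_pCons polys_0, auto simp: semidomain_def)
  have a: "sd_atom ?T p1" "sd_atom ?T p2" "sd_atom ?T q1" "sd_atom ?T q2"
    using atom_p1[OF assms(1)] atom_p2[OF assms(1) nm] atom_q1[OF assms(1) nm] atom_q2[OF assms(1) nm]
    by (simp_all add: p1_def p2_def q1_def q2_def)
  have f1: "sd_factorization ?T (p1*p2) [p1,p2]"
    unfolding sd_factorization_def sd_assoc_def using a u1
    by (auto intro!: exI[of _ 1])
  have f2: "sd_factorization ?T (p1*p2) [q1,q2]"
    unfolding sd_factorization_def sd_assoc_def eqp using a u1
    by (auto intro!: exI[of _ 1])
  have ne: "\<not> sd_fact_equiv ?T [p1,p2] [q1,q2]"
  proof
    assume "sd_fact_equiv ?T [p1,p2] [q1,q2]"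
    then obtain zs where zs: "mset zs = mset [q1,q2]" "list_all2 (sd_assoc ?T) [p1,p2] zs"
      unfolding sd_fact_equiv_def by blast
    then obtain z zs' where "zs = z # zs'" "sd_assoc ?T p1 z" by (cases zs) auto
    moreover have "z \<in> set zs" using \<open>zs = z # zs'\<close> by simp
    hence "z \<in> {q1,q2}" using zs(1) by (metis set_mset_mset set_simps(1,2) insert_commute)
    ultimately show False using assoc_deg[of S p1 z] by (auto simp: p1_def q1_def q2_def)
  qed
  show ?thesis using assms(2) bT f1 f2 ne unfolding length_factorial_def by fastforce
qed
end
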